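(* Let $F=\mathbb{Q}$ or $F=\mathbb{Q}(\sqrt{-d})$ for some square-free positive integer $d$, regarded as a subfield of $\mathbb{C}$, with ring of integers $\mathcal{O}_F$. Let $\mathfrak{p}$ be a nonzero prime ideal of $\mathcal{O}_F$, let $\pi\in F$ with $v_\mathfrak{p}(\pi)=1$, and let $b\in\mathcal{O}_F$ be not a square modulo $\mathfrak{p}$, so that $Q=(\pi,b)_F$ is a division algebra. Fix a complex square root $\sqrt{\pi}$ of $\pi$ (so $K=F(\sqrt{\pi})$ is a maximal commutative subfield of $Q$) and consider the codebook $$\mathcal{C}(Q)=\left\{\begin{bmatrix}\alpha+\beta\sqrt{\pi} & \gamma+\delta\sqrt{\pi}\\ b(\gamma-\delta\sqrt{\pi}) & \alpha-\beta\sqrt{\pi}\end{bmatrix}\;\middle|\;\alpha,\beta,\gamma,\delta\in\mathcal{O}_F\right\}\subset M_2(\mathbb{C}).$$ Then $\mathcal{C}(Q)$ satisfies the non-vanishing determinant criterion, i.e. $\inf_{0\neq X\in\mathcal{C}(Q)}|\det X|^2>0$.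
   Context: $v_\mathfrak{p}$ is the $\mathfrak{p}$-adic valuation on $F$. For $a,b\in F^\times$, $(a,b)_F$ is the $F$-algebra with basis $1,\mathbf i,\mathbf j,\mathbf k$ and relations $\mathbf i^2=a$, $\mathbf j^2=b$, $\mathbf i\mathbf j=-\mathbf j\mathbf i=\mathbf k$. The non-vanishing determinant (NVD) criterion for an infinite codebook $\mathcal{C}$ of square complex matrices means that the minimum determinant $\inf_{0\neq X\in\mathcal{C}}|\det X|^2$ is strictly positive. *)

theory Defs
  imports "HOL-Analysis.Analysis" "HOL-Computational_Algebra.Computational_Algebra"
begin

definition ring_of_integers :: "complex set \<Rightarrow> complex set" where
  "ring_of_integers F = {x \<in> F. algebraic_int x}"

definition is_nonzero_prime_ideal :: "complex set \<Rightarrow> complex set \<Rightarrow> bool" where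
  "is_nonzero_prime_ideal R P \<longleftrightarrow>
     P \<subseteq> R \<and> 0 \<in> P \<and> P \<noteq> {0} \<and> P \<noteq> R \<and>
     (\<forall>x\<in>P. \<forall>y\<in>P. x + y \<in> P) \<and>
     (\<forall>r\<in>R. \<forall>x\<in>P. r * x \<in> P) \<and>
     (\<forall>x\<in>R. \<forall>y\<in>R. x * y \<in> P \<longrightarrow> x \<in> P \<or> y \<in> P)"

definition ideal_mult_set :: "complex set \<Rightarrow> complex set \<Rightarrow> complex set" where
  "ideal_mult_set I J = {(\<Sum>i<k. a i * c i) | (k::nat) a c. \<forall>i<k. a i \<in> I \<and> c i \<in> J}"

fun ideal_power_set :: "complex set \<Rightarrow> complex set \<Rightarrow> nat \<Rightarrow> complex set" where
  "ideal_power_set R P 0 = R"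
| "ideal_power_set R P (Suc n) = ideal_mult_set (ideal_power_set R P n) P"

definition ord_eq :: "complex set \<Rightarrow> complex set \<Rightarrow> complex \<Rightarrow> nat \<Rightarrow> bool" where
  "ord_eq R P x n \<longleftrightarrow> x \<in> ideal_power_set R P n \<and> x \<notin> ideal_power_set R P (Suc n)"

definition pval_eq :: "complex set \<Rightarrow> complex set \<Rightarrow> complex \<Rightarrow> int \<Rightarrow> bool" where
  "pval_eq R P z k \<longleftrightarrow>
     (\<exists>x y m n. x \<in> R \<and> y \<in> R \<and> x \<noteq> 0 \<and> y \<noteq> 0 \<and> z = x / y \<and>
        ord_eq R P x m \<and> ord_eq R P y n \<and> int m - int n = k)"

text \<open>The codebook C(Q) for Q = (pi, b)_F, with s a fixed complex square root of pi.\<close>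
definition codebook :: "complex set \<Rightarrow> complex \<Rightarrow> complex \<Rightarrow> (complex^2^2) set" where
  "codebook R s b =
     {vector [vector [\<alpha> + \<beta> * s, \<gamma> + \<delta> * s],
              vector [b * (\<gamma> - \<delta> * s), \<alpha> - \<beta> * s]] | \<alpha> \<beta> \<gamma> \<delta>.
        \<alpha> \<in> R \<and> \<beta> \<in> R \<and> \<gamma> \<in> R \<and> \<delta> \<in> R}"

end

theory Submission
  imports Defs
begin



lemma alg_int_trnm:
  fixes z :: complex
  assumes "z + cnj z \<in> \<int>" "z * cnj z \<in> \<int>"
  shows "algebraic_int z"
proof
  show "lead_coeff [:z * cnj z, -(z + cnj z), 1:] = 1" by simp
  show "\<forall>i. coeff [:z * cnj z, -(z + cnj z), 1:] i \<in> \<int>"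
    using assms Ints_minus[OF assms(1)] by (auto simp: coeff_pCons split: nat.splits)
  show "poly [:z * cnj z, -(z + cnj z), 1:] z = 0" by (simp add: algebra_simps power2_eq_square)
qed

lemma rat_sq_int:
  fixes y :: complex
  assumes "y \<in> \<rat>" "y^2 \<in> \<int>"
  shows "y \<in> \<int>"
proof -
  have "algebraic_int y"
  proof
    show "lead_coeff [:-(y^2), 0, 1:] = 1" by simp
    show "\<forall>i. coeff [:-(y^2), 0, 1:] i \<in> \<int>"
      using assms by (auto simp: coeff_pCons split: nat.splits)
    show "poly [:-(y^2), 0, 1:] y = 0" by (simp add: algebra_simps power2_eq_square)
  qed
  thus ?thesis using assms rational_algebraic_int_is_int by blast
qed

lemma rat_denom:
  fixes x :: complex
  assumes "x \<in> \<rat>"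
  shows "\<exists>d::int. d > 0 \<and> of_int d * x \<in> \<int>"
proof -
  from assms obtain a b where "b > 0" "x = of_int a / of_int b"
    by (auto elim: Rats_cases')
  thus ?thesis by (intro exI[of _ b]) auto
qed

lemma common_denom:
  fixes f :: "nat \<Rightarrow> complex"
  assumes "\<And>i. f i \<in> \<rat>"
  shows "\<exists>d::int. d > 0 \<and> (\<forall>i<N. of_int d * f i \<in> \<int>)"
proof (induction N)
  case 0 thus ?case by (intro exI[of _ 1]) auto
next
  case (Suc N)
  then obtain d where d: "d > 0" "\<forall>i<N. of_int d * f i \<in> \<int>" by blast
  obtain e where e: "e > 0" "of_int e * f N \<in> \<int>" using rat_denom[OF assms] by blast
  have "\<forall>i<Suc N. of_int (d*e) * f i \<in> \<int>"
  proof (intro allI impI)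
    fix i assume "i < Suc N"
    show "of_int (d*e) * f i \<in> \<int>"
    proof (cases "i < N")
      case True
      have "of_int (d*e) * f i = of_int e * (of_int d * f i)" by simp
      thus ?thesis using d True by (metis Ints_mult Ints_of_int)
    next
      case False
      hence "i = N" using \<open>i < Suc N\<close> by simp
      have "of_int (d*e) * f i = of_int d * (of_int e * f N)" using \<open>i = N\<close> by simp
      thus ?thesis using e by (metis Ints_mult Ints_of_int)
    qed
  qed
  thus ?case using d e by (intro exI[of _ "d*e"]) auto
qed

lemma map_poly_of_int_mult:
  "map_poly (of_int :: int \<Rightarrow> complex) (p * q) = map_poly of_int p * map_poly of_int q"
  by (rule poly_eqI) (simp add: coeff_mult coeff_map_poly of_int_sum)

lemma map_poly_of_int_smult:
  "map_poly (of_int :: int \<Rightarrow> complex) (smult c p) = smult (of_int c) (map_poly of_int p)"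
  by (rule poly_eqI) (simp add: coeff_map_poly)

lemma map_poly_of_int_inj:
  "map_poly (of_int :: int \<Rightarrow> complex) p = map_poly of_int q \<Longrightarrow> p = q"
  by (metis (no_types, lifting) coeff_map_poly of_int_0 of_int_eq_iff poly_eqI)




lemma coeff_quad_mult:
  fixes h :: "complex poly"
  shows
  "coeff ([:c0, c1, 1:] * h) (Suc (Suc n)) = c0 * coeff h (Suc (Suc n)) + c1 * coeff h (Suc n) + coeff h n"
  by (simp add: mult_pCons_left algebra_simps)

lemma quad_factor_rat:
  fixes h :: "complex poly"
  assumes "c0 \<in> \<rat>" "c1 \<in> \<rat>" "\<And>i. coeff ([:c0, c1, 1:] * h) i \<in> \<rat>"
  shows "coeff h n \<in> \<rat>"
proof -
  have "\<forall>n. degree h < n + j \<longrightarrow> coeff h n \<in> \<rat>" for j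
  proof (induction j)
    case 0 thus ?case by (auto simp: coeff_eq_0)
  next
    case (Suc j)
    show ?case
    proof (intro allI impI)
      fix n assume "degree h < n + Suc j"
      hence "coeff h (Suc n) \<in> \<rat>" "coeff h (Suc (Suc n)) \<in> \<rat>" using Suc by auto
      moreover have "coeff h n = coeff ([:c0, c1, 1:] * h) (Suc (Suc n)) - c0 * coeff h (Suc (Suc n)) - c1 * coeff h (Suc n)"
        by (simp add: coeff_quad_mult)
      moreover have "coeff ([:c0, c1, 1:] * h) (Suc (Suc n)) \<in> \<rat>" by (rule assms(3))
      ultimately show "coeff h n \<in> \<rat>" using assms(1,2) by (metis Rats_diff Rats_mult)
    qed
  qed
  from this[of "Suc (degree h)"] show ?thesis by simp
qed

lemma quad_gauss:
  fixes z :: complex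
  assumes az: "algebraic_int z" and im: "Im z \<noteq> 0"
    and tr: "z + cnj z \<in> \<rat>" and nm: "z * cnj z \<in> \<rat>"
  shows "z + cnj z \<in> \<int> \<and> z * cnj z \<in> \<int>"
proof -
  obtain p where p0: "poly (map_poly of_int p) z = 0" and lp: "lead_coeff p = 1"
    using az by (auto simp: algebraic_int_altdef_ipoly)
  define P :: "complex poly" where "P = map_poly of_int p"
  have cnjP: "map_poly cnj P = P"
    by (rule poly_eqI) (simp add: P_def coeff_map_poly)
  have Pz: "poly P z = 0" using p0 by (simp add: P_def)
  have Pcz: "poly P (cnj z) = 0"
    using poly_cnj[of P z] Pz cnjP by simp
  have neq: "cnj z \<noteq> z" using im by (metis Reals_cnj_iff complex_is_Real_iff)
  obtain g where g: "P = [:-z, 1:] * g" using Pz by (metis poly_eq_0_iff_dvd dvdE)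
  have "poly g (cnj z) = 0" using Pcz neq by (simp add: g)
  then obtain h where h: "g = [:-cnj z, 1:] * h" by (metis poly_eq_0_iff_dvd dvdE)
  define c0 where "c0 = z * cnj z"
  define c1 where "c1 = -(z + cnj z)"
  have mm: "[:-z, 1:] * [:-cnj z, 1:] = [:c0, c1, 1:]"
    by (simp add: c0_def c1_def algebra_simps)
  have "P = ([:-z, 1:] * [:-cnj z, 1:]) * h" using g h by (simp only: mult.assoc)
  hence Pm: "P = [:c0, c1, 1:] * h" using mm by simp
  have c0q: "c0 \<in> \<rat>" "c1 \<in> \<rat>" using tr nm Rats_minus_iff[THEN iffD2, OF tr] by (auto simp: c0_def c1_def)
  have Pq: "coeff P i \<in> \<rat>" for i by (simp add: P_def coeff_map_poly)
  have hq: "coeff h i \<in> \<rat>" for i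
    using quad_factor_rat[OF c0q] Pm Pq by metis
  obtain s' where s': "s' > 0" "\<forall>i<Suc (degree h). of_int s' * coeff h i \<in> \<int>"
    using common_denom[of "coeff h", OF hq] by blast
  have s'h: "coeff (smult (of_int s') h) i \<in> \<int>" for i
    using s' by (cases "i < Suc (degree h)") (auto simp: coeff_eq_0)
  obtain H where H: "smult (of_int s') h = map_poly of_int H" using s'h by (metis intpolyE)
  have cq: "(if i = 0 then c0 else c1) \<in> \<rat>" for i :: nat using c0q by auto
  obtain s where s0: "s > 0" "\<forall>i<(2::nat). of_int s * (if i = 0 then c0 else c1) \<in> \<int>"
    using common_denom[of "\<lambda>i::nat. if i = 0 then c0 else c1", OF cq] by blast
  hence s: "s > 0" "of_int s * c0 \<in> \<int>" "of_int s * c1 \<in> \<int>"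
    by (auto dest: spec[of _ 0] spec[of _ 1])
  have sm: "coeff (smult (of_int s) [:c0, c1, 1:]) i \<in> \<int>" for i
    using s by (auto simp: coeff_pCons split: nat.splits)
  obtain M where M: "smult (of_int s) [:c0, c1, 1:] = map_poly of_int M" using sm by (metis intpolyE)
  have "map_poly of_int (smult (s * s') p) = map_poly (of_int :: int \<Rightarrow> complex) (M * H)"
  proof -
    have "map_poly of_int (smult (s * s') p) = smult (of_int s) [:c0,c1,1:] * smult (of_int s') h"
      by (simp only: map_poly_of_int_smult P_def[symmetric] Pm mult_smult_left mult_smult_right smult_smult of_int_mult) (simp add: ac_simps)
    thus ?thesis by (simp only: M H map_poly_of_int_mult)
  qed
  hence eq: "smult (s * s') p = M * H" by (rule map_poly_of_int_inj)
  have cp: "content p = 1"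
    using content_dvd_coeff[of p "degree p"] lp by (metis is_unit_content_iff)
  have ss: "s * s' > 0" using s s' by simp
  have "content (smult (s * s') p) = normalize (s * s') * content p" by (rule content_smult)
  also have "\<dots> = s * s'" using ss cp by simp
  finally have "content (M * H) = s * s'" using eq by simp
  hence cMH: "content M * content H = s * s'" by (simp only: content_mult)
  define cM where "cM = content M"
  define cH where "cH = content H"
  have n1: "cM \<ge> 0" "cH \<ge> 0" unfolding cM_def cH_def by (metis abs_ge_zero normalize_content normalize_int_def)+
  have n2: "cM \<noteq> 0" "cH \<noteq> 0" using cMH ss unfolding cM_def cH_def by auto
  have cMpos: "cM > 0" "cH > 0" using n1 n2 by auto
  have MH: "M * H = smult cM (primitive_part M) * smult cH (primitive_part H)"
    unfolding cM_def cH_def by simp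
  have "smult (s * s') p = smult (cM * cH) (primitive_part M * primitive_part H)"
    unfolding eq MH by (simp only: mult_smult_left mult_smult_right smult_smult) (simp add: ac_simps)
  hence "smult (s * s') p = smult (s * s') (primitive_part M * primitive_part H)"
    using cMH unfolding cM_def cH_def by simp
  hence pp: "p = primitive_part M * primitive_part H"
    using ss smult_cancel by (metis less_irrefl)
  have "lead_coeff (primitive_part M) * lead_coeff (primitive_part H) = 1"
    using lp pp by (simp add: lead_coeff_mult)
  hence lpm: "lead_coeff (primitive_part M) = 1 \<or> lead_coeff (primitive_part M) = -1"
    using zmult_eq_1_iff by blast
  have dM: "degree (map_poly (of_int :: int \<Rightarrow> complex) M) = 2" using M[symmetric] s by simp
  have "of_int (lead_coeff M) = (of_int s :: complex)"
    using arg_cong[OF M, of lead_coeff] dM s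
    by (simp add: degree_map_poly coeff_map_poly)
  hence lM: "lead_coeff M = s" by simp
  have "lead_coeff M = cM * lead_coeff (primitive_part M)"
    unfolding cM_def by (metis content_times_primitive_part lead_coeff_smult)
  hence lMc: "s = cM * lead_coeff (primitive_part M)" using lM by simp
  have "lead_coeff (primitive_part M) \<noteq> -1"
  proof
    assume "lead_coeff (primitive_part M) = -1"
    hence "s = - cM" using lMc by simp
    thus False using cMpos s by simp
  qed
  hence "lead_coeff (primitive_part M) = 1" using lpm by blast
  hence "cM = s" using lMc by simp
  hence Ms: "M = smult s (primitive_part M)" unfolding cM_def by (metis content_times_primitive_part)
  have "map_poly of_int M = smult (of_int s) (map_poly (of_int :: int \<Rightarrow> complex) (primitive_part M))"
    by (metis Ms map_poly_of_int_smult)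
  hence "smult (of_int s) [:c0, c1, 1:] = smult (of_int s) (map_poly of_int (primitive_part M))"
    using M by simp
  hence "[:c0, c1, 1:] = map_poly of_int (primitive_part M)"
    using s smult_cancel by (metis less_irrefl of_int_eq_0_iff)
  hence "coeff [:c0, c1, 1:] 0 \<in> \<int>" "coeff [:c0, c1, 1:] 1 \<in> \<int>"
    by (metis Ints_of_int coeff_map_poly of_int_0)+
  hence "c0 \<in> \<int>" "c1 \<in> \<int>" by simp_all
  thus ?thesis unfolding c0_def c1_def by (metis Ints_minus minus_minus)
qed




lemma ims_zero: "0 \<in> ideal_mult_set I J"
  unfolding ideal_mult_set_def by (rule CollectI, rule exI[of _ 0]) auto

lemma ims_single: "a \<in> I \<Longrightarrow> c \<in> J \<Longrightarrow> a * c \<in> ideal_mult_set I J"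
  unfolding ideal_mult_set_def
  by (rule CollectI, rule exI[of _ 1], rule exI[of _ "\<lambda>_. a"], rule exI[of _ "\<lambda>_. c"]) auto

lemma sum_concat_aux:
  fixes f g :: "nat \<Rightarrow> complex"
  shows "(\<Sum>i<k1. f i) + (\<Sum>i<k2. g i) = (\<Sum>i<k1+k2. if i < k1 then f i else g (i - k1))"
proof (induction k2)
  case 0 thus ?case by simp
next
  case (Suc k2) thus ?case by simp
qed

lemma ims_add:
  assumes "x \<in> ideal_mult_set I J" "y \<in> ideal_mult_set I J"
  shows "x + y \<in> ideal_mult_set I J"
proof -
  from assms(1) obtain k1 :: nat and a c where x: "x = (\<Sum>i<k1. a i * c i)" "\<forall>i<k1. a i \<in> I \<and> c i \<in> J"
    unfolding ideal_mult_set_def by blast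
  from assms(2) obtain k2 :: nat and a' c' where y: "y = (\<Sum>i<k2. a' i * c' i)" "\<forall>i<k2. a' i \<in> I \<and> c' i \<in> J"
    unfolding ideal_mult_set_def by blast
  define A where "A = (\<lambda>i. if i < k1 then a i else a' (i - k1))"
  define C where "C = (\<lambda>i. if i < k1 then c i else c' (i - k1))"
  have "x + y = (\<Sum>i<k1+k2. A i * C i)"
    unfolding x y sum_concat_aux A_def C_def by (intro sum.cong) auto
  moreover have "\<forall>i<k1+k2. A i \<in> I \<and> C i \<in> J"
    using x(2) y(2) unfolding A_def C_def by auto
  ultimately show ?thesis unfolding ideal_mult_set_def by blast
qed

lemma ims_induct:
  assumes "x \<in> ideal_mult_set I J" "0 \<in> T" "\<And>u v. u \<in> T \<Longrightarrow> v \<in> T \<Longrightarrow> u + v \<in> T"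
    "\<And>a c. a \<in> I \<Longrightarrow> c \<in> J \<Longrightarrow> a * c \<in> T"
  shows "x \<in> T"
proof -
  from assms(1) obtain k :: nat and a c where x: "x = (\<Sum>i<k. a i * c i)" "\<forall>i<k. a i \<in> I \<and> c i \<in> J"
    unfolding ideal_mult_set_def by blast
  have "\<forall>j\<le>k. (\<Sum>i<j. a i * c i) \<in> T"
  proof (intro allI impI)
    fix j assume "j \<le> k"
    thus "(\<Sum>i<j. a i * c i) \<in> T"
      by (induction j) (use assms x(2) in auto)
  qed
  thus ?thesis using x(1) by auto
qed

lemma alg_int_add_quad:
  fixes x y t1 t2 n1 n2 :: complex
  assumes hx: "x^2 = t1 * x - n1" and hy: "y^2 = t2 * y - n2"
    and ints: "t1 \<in> \<int>" "t2 \<in> \<int>" "n1 \<in> \<int>" "n2 \<in> \<int>"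
  shows "algebraic_int (x + y)"
proof -
  define T where "T = t1 + t2"
  define S where "S = n1 + n2"
  define K where "K = t1 * t2"
  define C where "C = n2 * (t1^2 - 2*n1) + n1 * (t2^2 - 2*n2)"
  define p where "p = [:S^2 + K*S + C, -2*T*S - K*T, T^2 + 2*S + K, -2*T, 1:]"
  have I: "T \<in> \<int>" "S \<in> \<int>" "K \<in> \<int>" "C \<in> \<int>"
    using ints unfolding T_def S_def K_def C_def by auto
  show ?thesis
  proof (rule algebraic_int.intros[of p])
    show "lead_coeff p = 1" by (simp add: p_def)
    show "\<forall>i. coeff p i \<in> \<int>"
      using I by (auto simp: p_def coeff_pCons split: nat.splits)
    have e: "S^2 + K*S + C + (x+y) * (-2*T*S - K*T + (x+y) * (T^2 + 2*S + K + (x+y) * (-2*T + (x+y)))) = 0"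
      unfolding T_def S_def K_def C_def using hx hy by algebra
    show "poly p (x + y) = 0" using e by (simp add: p_def)
  qed
qed

lemma alg_int_mult_quad:
  fixes x y t1 t2 n1 n2 :: complex
  assumes hx: "x^2 = t1 * x - n1" and hy: "y^2 = t2 * y - n2"
    and ints: "t1 \<in> \<int>" "t2 \<in> \<int>" "n1 \<in> \<int>" "n2 \<in> \<int>"
  shows "algebraic_int (x * y)"
proof -
  define N where "N = n1 * n2"
  define K where "K = t1 * t2"
  define C where "C = n2 * (t1^2 - 2*n1) + n1 * (t2^2 - 2*n2)"
  define p where "p = [:N^2, -K*N, 2*N + C, -K, 1:]"
  have I: "N \<in> \<int>" "K \<in> \<int>" "C \<in> \<int>"
    using ints unfolding N_def K_def C_def by auto
  show ?thesis
  proof (rule algebraic_int.intros[of p])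
    show "lead_coeff p = 1" by (simp add: p_def)
    show "\<forall>i. coeff p i \<in> \<int>"
      using I by (auto simp: p_def coeff_pCons split: nat.splits)
    have e: "N^2 + (x*y) * (-K*N + (x*y) * (2*N + C + (x*y) * (-K + (x*y)))) = 0"
      unfolding N_def K_def C_def using hx hy by algebra
    show "poly p (x * y) = 0" using e by (simp add: p_def)
  qed
qed




locale qf =
  fixes F :: "complex set" and P :: "complex set" and D :: int and w :: complex
  assumes F_add: "x \<in> F \<Longrightarrow> y \<in> F \<Longrightarrow> x + y \<in> F"
    and F_mult: "x \<in> F \<Longrightarrow> y \<in> F \<Longrightarrow> x * y \<in> F"
    and F_uminus: "x \<in> F \<Longrightarrow> - x \<in> F"
    and F_cnj: "x \<in> F \<Longrightarrow> cnj x \<in> F"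
    and F_inverse: "x \<in> F \<Longrightarrow> inverse x \<in> F"
    and F_rat: "r \<in> \<rat> \<Longrightarrow> r \<in> F"
    and F_tr: "x \<in> F \<Longrightarrow> x + cnj x \<in> \<rat>"
    and F_nm: "x \<in> F \<Longrightarrow> x * cnj x \<in> \<rat>"
    and F_real: "x \<in> F \<Longrightarrow> Im x = 0 \<Longrightarrow> x \<in> \<rat>"
    and D_pos: "D > 0"
    and w_F: "w \<in> F" and w_tr: "w + cnj w \<in> \<int>" and w_nm: "w * cnj w \<in> \<int>"
    and latt: "x \<in> F \<Longrightarrow> x + cnj x \<in> \<int> \<Longrightarrow> x * cnj x \<in> \<int> \<Longrightarrow>
                 \<exists>a b. of_int D * x = of_int a + of_int b * w"
    and prime: "is_nonzero_prime_ideal (ring_of_integers F) P"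
begin

abbreviation "R \<equiv> ring_of_integers F"
abbreviation IP where "IP k \<equiv> ideal_power_set R P k"

lemma R_char: "x \<in> R \<longleftrightarrow> x \<in> F \<and> x + cnj x \<in> \<int> \<and> x * cnj x \<in> \<int>"
proof
  assume x: "x \<in> R"
  hence xF: "x \<in> F" and ax: "algebraic_int x" by (auto simp: ring_of_integers_def)
  show "x \<in> F \<and> x + cnj x \<in> \<int> \<and> x * cnj x \<in> \<int>"
  proof (cases "Im x = 0")
    case True
    hence c: "cnj x = x" by (simp add: complex_eq_iff)
    have "x \<in> \<int>" using rational_algebraic_int_is_int[OF ax F_real[OF xF True]] .
    thus ?thesis using xF c by auto
  next
    case False
    thus ?thesis using quad_gauss[OF ax False F_tr[OF xF] F_nm[OF xF]] xF by auto
  qed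
next
  assume "x \<in> F \<and> x + cnj x \<in> \<int> \<and> x * cnj x \<in> \<int>"
  thus "x \<in> R" using alg_int_trnm by (auto simp: ring_of_integers_def)
qed

lemma R_F: "x \<in> R \<Longrightarrow> x \<in> F" by (simp add: R_char)
lemma R_tr: "x \<in> R \<Longrightarrow> x + cnj x \<in> \<int>" by (simp add: R_char)
lemma R_nm: "x \<in> R \<Longrightarrow> x * cnj x \<in> \<int>" by (simp add: R_char)

lemma R_quad: "x \<in> R \<Longrightarrow> x^2 = (x + cnj x) * x - x * cnj x"
  by (simp add: algebra_simps power2_eq_square)

lemma R_int: "of_int k \<in> R"
  unfolding ring_of_integers_def by (auto intro: F_rat)
lemma R_0: "0 \<in> R" using R_int[of 0] by simp
lemma R_1: "1 \<in> R" using R_int[of 1] by simp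

lemma R_add: assumes "x \<in> R" "y \<in> R" shows "x + y \<in> R"
proof -
  have "algebraic_int (x + y)"
    by (rule alg_int_add_quad[OF R_quad[OF assms(1)] R_quad[OF assms(2)] R_tr[OF assms(1)] R_tr[OF assms(2)] R_nm[OF assms(1)] R_nm[OF assms(2)]])
  moreover have "x + y \<in> F" using F_add R_F assms by blast
  ultimately show ?thesis by (simp add: ring_of_integers_def)
qed

lemma R_mult: assumes "x \<in> R" "y \<in> R" shows "x * y \<in> R"
proof -
  have "algebraic_int (x * y)"
    by (rule alg_int_mult_quad[OF R_quad[OF assms(1)] R_quad[OF assms(2)] R_tr[OF assms(1)] R_tr[OF assms(2)] R_nm[OF assms(1)] R_nm[OF assms(2)]])
  moreover have "x * y \<in> F" using F_mult R_F assms by blast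
  ultimately show ?thesis by (simp add: ring_of_integers_def)
qed

lemma R_uminus: "x \<in> R \<Longrightarrow> - x \<in> R"
  unfolding ring_of_integers_def by (simp add: F_uminus)

lemma R_diff: "x \<in> R \<Longrightarrow> y \<in> R \<Longrightarrow> x - y \<in> R"
  by (metis R_add R_uminus diff_conv_add_uminus)

lemma R_cnj: "x \<in> R \<Longrightarrow> cnj x \<in> R"
  unfolding ring_of_integers_def by (simp add: F_cnj)

lemma R_pow: "x \<in> R \<Longrightarrow> x ^ k \<in> R"
proof (induction k)
  case 0 thus ?case using R_1 by simp
next
  case (Suc k) thus ?case using R_mult by simp
qed

lemma w_R: "w \<in> R" using R_char w_F w_tr w_nm by blast

lemma P_sub: "P \<subseteq> R" using prime unfolding is_nonzero_prime_ideal_def by blast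
lemma P_0: "0 \<in> P" using prime unfolding is_nonzero_prime_ideal_def by blast
lemma P_add: "x \<in> P \<Longrightarrow> y \<in> P \<Longrightarrow> x + y \<in> P" using prime unfolding is_nonzero_prime_ideal_def by blast
lemma P_mult: "r \<in> R \<Longrightarrow> x \<in> P \<Longrightarrow> r * x \<in> P" using prime unfolding is_nonzero_prime_ideal_def by blast
lemma P_mult': "x \<in> P \<Longrightarrow> r \<in> R \<Longrightarrow> x * r \<in> P" using P_mult by (simp add: mult.commute)
lemma P_prime: "x \<in> R \<Longrightarrow> y \<in> R \<Longrightarrow> x * y \<in> P \<Longrightarrow> x \<in> P \<or> y \<in> P"
  using prime unfolding is_nonzero_prime_ideal_def by blast
lemma P_nz: "\<exists>a\<in>P. a \<noteq> 0" using prime P_0 unfolding is_nonzero_prime_ideal_def by blast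
lemma P_1: "1 \<notin> P"
proof
  assume "1 \<in> P"
  hence "R \<subseteq> P" using P_mult'[of 1] by auto
  thus False using prime P_sub unfolding is_nonzero_prime_ideal_def by blast
qed
lemma P_R: "x \<in> P \<Longrightarrow> x \<in> R" using P_sub by auto
lemma P_uminus: "x \<in> P \<Longrightarrow> - x \<in> P" using P_mult[OF R_int[of "-1"]] by simp
lemma P_diff: "x \<in> P \<Longrightarrow> y \<in> P \<Longrightarrow> x - y \<in> P"
  by (metis P_add P_uminus diff_conv_add_uminus)

lemma IP_sub: "IP k \<subseteq> R"
proof (induction k)
  case 0 thus ?case by simp
next
  case (Suc k)
  show ?case
  proof
    fix x assume "x \<in> IP (Suc k)"
    hence "x \<in> ideal_mult_set (IP k) P" by simp
    thus "x \<in> R"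
      by (rule ims_induct) (use Suc P_sub in \<open>auto intro: R_0 R_add R_mult\<close>)
  qed
qed

lemma IP_R: "x \<in> IP k \<Longrightarrow> x \<in> R" using IP_sub by auto

lemma IP_0: "0 \<in> IP k"
  by (cases k) (auto simp: R_0 ims_zero)

lemma IP_add: "x \<in> IP k \<Longrightarrow> y \<in> IP k \<Longrightarrow> x + y \<in> IP k"
  by (cases k) (auto simp: R_add ims_add)

lemma IP_mult: "r \<in> R \<Longrightarrow> x \<in> IP k \<Longrightarrow> r * x \<in> IP k"
proof (induction k arbitrary: r x)
  case 0 thus ?case by (simp add: R_mult)
next
  case (Suc k)
  have "x \<in> ideal_mult_set (IP k) P" using Suc.prems by simp
  hence "x \<in> {x. r * x \<in> IP (Suc k)}"
  proof (rule ims_induct)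
    show "0 \<in> {x. r * x \<in> IP (Suc k)}" by (simp add: ims_zero)
    show "u + v \<in> {x. r * x \<in> IP (Suc k)}" if "u \<in> {x. r * x \<in> IP (Suc k)}" "v \<in> {x. r * x \<in> IP (Suc k)}" for u v
      using that by (simp add: distrib_left ims_add)
    show "a * c \<in> {x. r * x \<in> IP (Suc k)}" if "a \<in> IP k" "c \<in> P" for a c
    proof -
      have "r * a \<in> IP k" using Suc.IH[OF Suc.prems(1) that(1)] .
      hence "(r * a) * c \<in> IP (Suc k)" using that(2) by (simp add: ims_single)
      thus ?thesis by (simp add: mult.assoc)
    qed
  qed
  thus ?case by simp
qed

lemma IP_mult': "x \<in> IP k \<Longrightarrow> r \<in> R \<Longrightarrow> x * r \<in> IP k"
  using IP_mult by (simp add: mult.commute)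

lemma IP_uminus: "x \<in> IP k \<Longrightarrow> - x \<in> IP k" using IP_mult[OF R_int[of "-1"]] by simp
lemma IP_diff: "x \<in> IP k \<Longrightarrow> y \<in> IP k \<Longrightarrow> x - y \<in> IP k"
  by (metis IP_add IP_uminus diff_conv_add_uminus)

lemma IP_Suc_sub: "IP (Suc k) \<subseteq> IP k"
proof
  fix x assume "x \<in> IP (Suc k)"
  hence "x \<in> ideal_mult_set (IP k) P" by simp
  thus "x \<in> IP k"
    by (rule ims_induct) (use P_sub in \<open>auto intro: IP_0 IP_add IP_mult'\<close>)
qed

lemma IP_mono: "j \<le> k \<Longrightarrow> IP k \<subseteq> IP j"
proof (induction k)
  case 0 thus ?case by simp
next
  case (Suc k)
  thus ?case using IP_Suc_sub by (metis le_Suc_eq order_refl order_trans)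
qed

lemma IP_prod: "a \<in> IP k \<Longrightarrow> c \<in> IP l \<Longrightarrow> a * c \<in> IP (k + l)"
proof (induction l arbitrary: c)
  case 0 thus ?case by (simp add: IP_mult')
next
  case (Suc l)
  have "c \<in> ideal_mult_set (IP l) P" using Suc.prems by simp
  hence "c \<in> {c. a * c \<in> IP (k + Suc l)}"
  proof (rule ims_induct)
    show "0 \<in> {c. a * c \<in> IP (k + Suc l)}" by (simp add: ims_zero)
    show "u + v \<in> {c. a * c \<in> IP (k + Suc l)}" if "u \<in> {c. a * c \<in> IP (k + Suc l)}" "v \<in> {c. a * c \<in> IP (k + Suc l)}" for u v
      using that by (simp add: distrib_left ims_add)
    show "a' * c' \<in> {c. a * c \<in> IP (k + Suc l)}" if "a' \<in> IP l" "c' \<in> P" for a' c'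
    proof -
      have "a * a' \<in> IP (k + l)" using Suc.IH[OF Suc.prems(1) that(1)] .
      hence "(a * a') * c' \<in> IP (Suc (k + l))" using that(2) by (simp add: ims_single)
      thus ?thesis by (simp add: mult.assoc)
    qed
  qed
  thus ?case by simp
qed

lemma IP1_P: "IP (Suc 0) \<subseteq> P"
proof
  fix x assume "x \<in> IP (Suc 0)"
  hence "x \<in> ideal_mult_set R P" by simp
  thus "x \<in> P" by (rule ims_induct) (auto intro: P_0 P_add P_mult)
qed

end



context qf begin

abbreviation "PPb \<equiv> ideal_mult_set P (cnj ` P)"

lemma PPb_P: "x \<in> PPb \<Longrightarrow> x \<in> P"
  by (rule ims_induct) (auto intro: P_0 P_add P_mult' R_cnj P_R)

lemma PPb_mult_int: "x \<in> PPb \<Longrightarrow> of_int k * x \<in> PPb"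
proof -
  assume "x \<in> PPb"
  hence "x \<in> {x. of_int k * x \<in> PPb}"
  proof (rule ims_induct)
    show "0 \<in> {x. of_int k * x \<in> PPb}" by (simp add: ims_zero)
    show "u + v \<in> {x. of_int k * x \<in> PPb}" if "u \<in> {x. of_int k * x \<in> PPb}" "v \<in> {x. of_int k * x \<in> PPb}" for u v
      using that by (simp add: distrib_left ims_add)
    show "a * c \<in> {x. of_int k * x \<in> PPb}" if "a \<in> P" "c \<in> cnj ` P" for a c
    proof -
      have "of_int k * a \<in> P" using P_mult[OF R_int that(1)] .
      hence "(of_int k * a) * c \<in> PPb" using that(2) by (simp add: ims_single)
      thus ?thesis by (simp add: mult.assoc)
    qed
  qed
  thus ?thesis by simp
qed

definition S where "S = {t::int. of_int t \<in> PPb}"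

lemma S_add: "s \<in> S \<Longrightarrow> t \<in> S \<Longrightarrow> s + t \<in> S"
  unfolding S_def by (simp add: ims_add)

lemma S_mult: "t \<in> S \<Longrightarrow> k * t \<in> S"
  unfolding S_def using PPb_mult_int by simp

lemma S_nm: "a \<in> P \<Longrightarrow> \<exists>t\<in>S. of_int t = a * cnj a"
proof -
  assume a: "a \<in> P"
  obtain t where t: "a * cnj a = of_int t" using R_nm[OF P_R[OF a]] by (auto elim: Ints_cases)
  have "a * cnj a \<in> PPb" using a by (intro ims_single) auto
  thus ?thesis using t unfolding S_def by auto
qed

lemma S_tr: "a \<in> P \<Longrightarrow> c \<in> P \<Longrightarrow> \<exists>t\<in>S. of_int t = a * cnj c + c * cnj a"
proof -
  assume a: "a \<in> P" and c: "c \<in> P"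
  have "a * cnj c \<in> R" using R_mult[OF P_R[OF a] R_cnj[OF P_R[OF c]]] .
  hence "a * cnj c + cnj (a * cnj c) \<in> \<int>" by (rule R_tr)
  hence "a * cnj c + c * cnj a \<in> \<int>" by (simp add: mult.commute)
  then obtain t where t: "a * cnj c + c * cnj a = of_int t" by (auto elim: Ints_cases)
  have "a * cnj c \<in> PPb" "c * cnj a \<in> PPb" using a c by (auto intro: ims_single)
  hence "a * cnj c + c * cnj a \<in> PPb" by (rule ims_add)
  thus ?thesis using t unfolding S_def by auto
qed

lemma S_pos: "\<exists>t\<in>S. t > 0"
proof -
  obtain a where a: "a \<in> P" "a \<noteq> 0" using P_nz by blast
  obtain t where t: "t \<in> S" "of_int t = a * cnj a" using S_nm[OF a(1)] by blast
  have "a * cnj a = of_real ((cmod a)^2)" by (metis complex_norm_square of_real_power)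
  hence "real_of_int t = (cmod a)^2" using t(2) by (metis of_real_eq_iff of_real_of_int_eq)
  hence "t > 0" using a(2) by (metis of_int_0_less_iff zero_less_norm_iff zero_less_power)
  thus ?thesis using t by blast
qed

definition nn :: nat where "nn = (LEAST m::nat. m > 0 \<and> int m \<in> S)"
definition n :: int where "n = int nn"

lemma nn_prop: "nn > 0 \<and> int nn \<in> S"
proof -
  obtain t where "t \<in> S" "t > 0" using S_pos by blast
  hence "nat t > 0 \<and> int (nat t) \<in> S" by simp
  thus ?thesis unfolding nn_def by (rule LeastI)
qed

lemma n_pos: "n > 0" and n_S: "n \<in> S" using nn_prop unfolding n_def by auto

lemma n_dvd: "t \<in> S \<Longrightarrow> n dvd t"
proof -
  assume t: "t \<in> S"
  have eq: "t mod n = t + (- (t div n)) * n" by (simp add: minus_div_mult_eq_mod[symmetric])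
  have h: "t + (- (t div n)) * n \<in> S" by (rule S_add[OF t S_mult[OF n_S]])
  have m: "t mod n \<in> S" by (subst eq) (rule h)
  have "t mod n = 0"
  proof (rule ccontr)
    assume "t mod n \<noteq> 0"
    hence pos: "t mod n > 0" using n_pos by (simp add: order_le_neq_trans)
    have "t mod n < n" using n_pos by simp
    hence "nat (t mod n) < nn" using pos unfolding n_def by simp
    moreover have "nat (t mod n) > 0 \<and> int (nat (t mod n)) \<in> S" using pos m by simp
    ultimately show False unfolding nn_def using not_less_Least by blast
  qed
  thus ?thesis by auto
qed

lemma n_PPb: "of_int n \<in> PPb" using n_S unfolding S_def by simp

lemma n_P: "of_int n \<in> P" using PPb_P[OF n_PPb] .

lemma n_ge2: "n \<ge> 2"
proof -
  have "n \<noteq> 1" using n_P P_1 by auto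
  thus ?thesis using n_pos by simp
qed

lemma n_nz: "(of_int n :: complex) \<noteq> 0" using n_pos by simp

lemma key1:
  assumes a: "a \<in> P" and c: "c \<in> P"
  shows "a * cnj c / of_int n \<in> R"
proof -
  define q where "q = a * cnj c / of_int n"
  have qF: "q \<in> F" unfolding q_def divide_complex_def
    using F_mult[OF F_mult[OF R_F[OF P_R[OF a]] F_cnj[OF R_F[OF P_R[OF c]]]] F_inverse[OF F_rat]] by simp
  obtain t where t: "t \<in> S" "of_int t = a * cnj c + c * cnj a" using S_tr[OF a c] by blast
  obtain t' where t': "t = n * t'" using n_dvd[OF t(1)] by (auto elim: dvdE)
  have "q + cnj q = (a * cnj c + c * cnj a) / of_int n" by (simp add: q_def add_divide_distrib mult.commute)
  also have "\<dots> = of_int t'" using n_nz by (simp flip: t(2) add: t')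
  finally have tr: "q + cnj q \<in> \<int>" by simp
  obtain u where u: "u \<in> S" "of_int u = a * cnj a" using S_nm[OF a] by blast
  obtain v where v: "v \<in> S" "of_int v = c * cnj c" using S_nm[OF c] by blast
  obtain u' where u': "u = n * u'" using n_dvd[OF u(1)] by (auto elim: dvdE)
  obtain v' where v': "v = n * v'" using n_dvd[OF v(1)] by (auto elim: dvdE)
  have "q * cnj q = (a * cnj a) * (c * cnj c) / (of_int n * of_int n)" by (simp add: q_def)
  also have "\<dots> = of_int (u' * v')" using u(2) v(2) u' v' n_nz by (simp flip: u(2) v(2))
  finally have nm: "q * cnj q \<in> \<int>" by simp
  show ?thesis using R_char qF tr nm unfolding q_def by blast
qed

end



context qf begin

lemma lemE: "u \<in> IP t \<Longrightarrow> e \<in> IP t \<Longrightarrow> u * cnj e / of_int n ^ t \<in> R"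
proof (induction t arbitrary: u e)
  case 0 thus ?case by (simp add: R_mult R_cnj)
next
  case (Suc t)
  have "u \<in> ideal_mult_set (IP t) P" using Suc.prems(1) by simp
  hence "u \<in> {u. u * cnj e / of_int n ^ Suc t \<in> R}"
  proof (rule ims_induct)
    show "0 \<in> {u. u * cnj e / of_int n ^ Suc t \<in> R}" by (simp add: R_0)
    show "u + v \<in> {u. u * cnj e / of_int n ^ Suc t \<in> R}"
      if "u \<in> {u. u * cnj e / of_int n ^ Suc t \<in> R}" "v \<in> {u. u * cnj e / of_int n ^ Suc t \<in> R}" for u v
      using that R_add by (simp add: distrib_right add_divide_distrib)
    show "a * c \<in> {u. u * cnj e / of_int n ^ Suc t \<in> R}" if a: "a \<in> IP t" and c: "c \<in> P" for a c
    proof -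
      have "e \<in> ideal_mult_set (IP t) P" using Suc.prems(2) by simp
      hence "e \<in> {e. a * c * cnj e / of_int n ^ Suc t \<in> R}"
      proof (rule ims_induct)
        show "0 \<in> {e. a * c * cnj e / of_int n ^ Suc t \<in> R}" by (simp add: R_0)
        show "u + v \<in> {e. a * c * cnj e / of_int n ^ Suc t \<in> R}"
          if "u \<in> {e. a * c * cnj e / of_int n ^ Suc t \<in> R}" "v \<in> {e. a * c * cnj e / of_int n ^ Suc t \<in> R}" for u v
          using that R_add by (simp add: distrib_left add_divide_distrib)
        show "a' * c' \<in> {e. a * c * cnj e / of_int n ^ Suc t \<in> R}" if a': "a' \<in> IP t" and c': "c' \<in> P" for a' c'
        proof -
          have eq: "a * c * cnj (a' * c') / of_int n ^ Suc t = (a * cnj a' / of_int n ^ t) * (c * cnj c' / of_int n)"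
            using n_nz by (simp add: field_simps)
          show ?thesis using R_mult[OF Suc.IH[OF a a'] key1[OF c c']] eq by simp
        qed
      qed
      thus ?thesis by simp
    qed
  qed
  thus ?case by simp
qed

lemma lemD: "u \<in> IP (Suc t) \<Longrightarrow> e \<in> IP t \<Longrightarrow> u * cnj e / of_int n ^ t \<in> P"
proof -
  assume u: "u \<in> IP (Suc t)" and e: "e \<in> IP t"
  have "u \<in> ideal_mult_set (IP t) P" using u by simp
  hence "u \<in> {u. u * cnj e / of_int n ^ t \<in> P}"
  proof (rule ims_induct)
    show "0 \<in> {u. u * cnj e / of_int n ^ t \<in> P}" by (simp add: P_0)
    show "u + v \<in> {u. u * cnj e / of_int n ^ t \<in> P}"
      if "u \<in> {u. u * cnj e / of_int n ^ t \<in> P}" "v \<in> {u. u * cnj e / of_int n ^ t \<in> P}" for u v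
      using that P_add by (simp add: distrib_right add_divide_distrib)
    show "a * c \<in> {u. u * cnj e / of_int n ^ t \<in> P}" if a: "a \<in> IP t" and c: "c \<in> P" for a c
    proof -
      have eq: "a * c * cnj e / of_int n ^ t = (a * cnj e / of_int n ^ t) * c" by (simp add: field_simps)
      have "(a * cnj e / of_int n ^ t) * c \<in> P" by (rule P_mult[OF lemE[OF a e] c])
      thus ?thesis by (simp only: mem_Collect_eq eq)
    qed
  qed
  thus ?thesis by simp
qed

lemma lemG: "of_int n ^ t \<in> ideal_mult_set (IP t) (cnj ` IP t)"
proof (induction t)
  case 0
  have "1 * cnj 1 \<in> ideal_mult_set (IP 0) (cnj ` IP 0)" using R_1 by (intro ims_single) auto
  thus ?case by simp
next
  case (Suc t)
  have y: "of_int n \<in> PPb" by (rule n_PPb)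
  have "of_int n ^ t \<in> {x. x * of_int n \<in> ideal_mult_set (IP (Suc t)) (cnj ` IP (Suc t))}"
    using Suc.IH
  proof (rule ims_induct)
    show "0 \<in> {x. x * of_int n \<in> ideal_mult_set (IP (Suc t)) (cnj ` IP (Suc t))}" by (simp add: ims_zero)
    show "u + v \<in> {x. x * of_int n \<in> ideal_mult_set (IP (Suc t)) (cnj ` IP (Suc t))}"
      if "u \<in> {x. x * of_int n \<in> ideal_mult_set (IP (Suc t)) (cnj ` IP (Suc t))}"
         "v \<in> {x. x * of_int n \<in> ideal_mult_set (IP (Suc t)) (cnj ` IP (Suc t))}" for u v
      using that by (simp add: distrib_right ims_add)
    show "a * c \<in> {x. x * of_int n \<in> ideal_mult_set (IP (Suc t)) (cnj ` IP (Suc t))}"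
      if a: "a \<in> IP t" and c: "c \<in> cnj ` IP t" for a c
    proof -
      obtain e where e: "e \<in> IP t" "c = cnj e" using c by blast
      have "of_int n \<in> {y. a * c * y \<in> ideal_mult_set (IP (Suc t)) (cnj ` IP (Suc t))}"
        using y
      proof (rule ims_induct)
        show "0 \<in> {y. a * c * y \<in> ideal_mult_set (IP (Suc t)) (cnj ` IP (Suc t))}" by (simp add: ims_zero)
        show "u + v \<in> {y. a * c * y \<in> ideal_mult_set (IP (Suc t)) (cnj ` IP (Suc t))}"
          if "u \<in> {y. a * c * y \<in> ideal_mult_set (IP (Suc t)) (cnj ` IP (Suc t))}"
             "v \<in> {y. a * c * y \<in> ideal_mult_set (IP (Suc t)) (cnj ` IP (Suc t))}" for u v
          using that by (simp add: distrib_left ims_add)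
        show "a' * c' \<in> {y. a * c * y \<in> ideal_mult_set (IP (Suc t)) (cnj ` IP (Suc t))}"
          if a': "a' \<in> P" and c': "c' \<in> cnj ` P" for a' c'
        proof -
          obtain e' where e': "e' \<in> P" "c' = cnj e'" using c' by blast
          have "a * a' \<in> IP (Suc t)" using a a' by (simp add: ims_single)
          moreover have "e * e' \<in> IP (Suc t)" using e e' by (simp add: ims_single)
          hence "cnj (e * e') \<in> cnj ` IP (Suc t)" by (rule imageI)
          ultimately have "(a * a') * cnj (e * e') \<in> ideal_mult_set (IP (Suc t)) (cnj ` IP (Suc t))"
            by (rule ims_single)
          moreover have "(a * a') * cnj (e * e') = a * c * (a' * c')" using e e' by (simp add: ac_simps)
          ultimately have "a * c * (a' * c') \<in> ideal_mult_set (IP (Suc t)) (cnj ` IP (Suc t))" by metis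
          thus ?thesis by (simp only: mem_Collect_eq)
        qed
      qed
      thus ?thesis by simp
    qed
  qed
  thus ?case by (simp add: mult.commute)
qed

lemma lemF:
  assumes u: "u \<in> R" and h: "\<forall>e\<in>IP t. u * cnj e / of_int n ^ t \<in> P"
  shows "u \<in> IP (Suc t)"
proof -
  have "of_int n ^ t \<in> {x. u * x / of_int n ^ t \<in> IP (Suc t)}"
    using lemG
  proof (rule ims_induct)
    show "0 \<in> {x. u * x / of_int n ^ t \<in> IP (Suc t)}" by (simp add: ims_zero)
    show "v1 + v2 \<in> {x. u * x / of_int n ^ t \<in> IP (Suc t)}"
      if "v1 \<in> {x. u * x / of_int n ^ t \<in> IP (Suc t)}" "v2 \<in> {x. u * x / of_int n ^ t \<in> IP (Suc t)}" for v1 v2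
      using that by (simp add: distrib_left add_divide_distrib ims_add)
    show "a * c \<in> {x. u * x / of_int n ^ t \<in> IP (Suc t)}" if a: "a \<in> IP t" and c: "c \<in> cnj ` IP t" for a c
    proof -
      obtain e where e: "e \<in> IP t" "c = cnj e" using c by blast
      have "u * cnj e / of_int n ^ t \<in> P" using h e by blast
      hence "a * (u * cnj e / of_int n ^ t) \<in> ideal_mult_set (IP t) P" by (rule ims_single[OF a])
      hence "a * (u * cnj e / of_int n ^ t) \<in> IP (Suc t)" by (simp only: ideal_power_set.simps)
      moreover have "a * (u * cnj e / of_int n ^ t) = u * (a * c) / of_int n ^ t" using e by simp
      ultimately have "u * (a * c) / of_int n ^ t \<in> IP (Suc t)" by metis
      thus ?thesis by (simp only: mem_Collect_eq)
    qed
  qed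
  thus ?thesis using n_nz by simp
qed

lemma witness:
  assumes "z \<in> IP k" "z \<notin> IP (Suc k)"
  shows "\<exists>e\<in>IP k. z * cnj e / of_int n ^ k \<in> R \<and> z * cnj e / of_int n ^ k \<notin> P"
  using lemF[OF IP_R[OF assms(1)]] assms lemE by blast

lemma mult_val:
  assumes z: "z \<in> IP k" "z \<notin> IP (Suc k)" and w: "x \<in> IP l" "x \<notin> IP (Suc l)"
  shows "z * x \<notin> IP (Suc (k + l))"
proof
  assume zx: "z * x \<in> IP (Suc (k + l))"
  obtain e where e: "e \<in> IP k" "z * cnj e / of_int n ^ k \<in> R" "z * cnj e / of_int n ^ k \<notin> P"
    using witness[OF z] by blast
  obtain e' where e': "e' \<in> IP l" "x * cnj e' / of_int n ^ l \<in> R" "x * cnj e' / of_int n ^ l \<notin> P"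
    using witness[OF w] by blast
  have "(z * cnj e / of_int n ^ k) * (x * cnj e' / of_int n ^ l) \<notin> P"
    using P_prime e e' by blast
  moreover have "z * x * cnj (e * e') / of_int n ^ (k + l) \<in> P"
    using lemD[OF zx IP_prod[OF e(1) e'(1)]] .
  moreover have "z * x * cnj (e * e') / of_int n ^ (k + l) = (z * cnj e / of_int n ^ k) * (x * cnj e' / of_int n ^ l)"
    using n_nz by (simp add: field_simps power_add)
  ultimately show False by simp
qed

lemma cancel:
  assumes z: "z \<in> IP k" "z \<notin> IP (Suc k)" and x: "x \<in> R"
  shows "z * x \<in> IP (k + r) \<Longrightarrow> x \<in> IP r"
proof (induction r)
  case 0 thus ?case using x by simp
next
  case (Suc r)
  have "z * x \<in> IP (k + r)" using Suc.prems IP_Suc_sub by auto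
  hence xr: "x \<in> IP r" by (rule Suc.IH)
  show ?case
  proof (rule ccontr)
    assume "x \<notin> IP (Suc r)"
    hence "z * x \<notin> IP (Suc (k + r))" using mult_val[OF z xr] by blast
    thus False using Suc.prems by simp
  qed
qed

end



context qf begin

lemma pow_notP: "x \<in> R \<Longrightarrow> x \<notin> P \<Longrightarrow> x ^ k \<notin> P"
proof (induction k)
  case 0 thus ?case using P_1 by simp
next
  case (Suc k) thus ?case using P_prime[OF Suc.prems(1) R_pow[OF Suc.prems(1)]] by auto
qed

lemma inv_mod:
  assumes x: "x \<in> R" "x \<notin> P"
  shows "\<exists>x'\<in>R. x * x' - 1 \<in> P"
proof -
  have "\<forall>i. \<exists>ab. of_int D * x ^ i = of_int (fst ab) + of_int (snd ab) * w"
  proof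
    fix i
    have "x ^ i \<in> R" using R_pow[OF x(1)] .
    then obtain a b where "of_int D * x ^ i = of_int a + of_int b * w"
      using latt R_char by blast
    thus "\<exists>ab. of_int D * x ^ i = of_int (fst ab) + of_int (snd ab) * w" by (intro exI[of _ "(a,b)"]) simp
  qed
  then obtain f where f: "\<And>i. of_int D * x ^ i = of_int (fst (f i)) + of_int (snd (f i)) * w"
    by metis
  define M where "M = D * n"
  have Mpos: "M > 0" unfolding M_def using D_pos n_pos by simp
  define g where "g = (\<lambda>i. (fst (f i) mod M, snd (f i) mod M))"
  have "g ` UNIV \<subseteq> {0..<M} \<times> {0..<M}" unfolding g_def using Mpos by auto
  hence "\<not> inj g" using inj_on_finite[of g UNIV "{0..<M} \<times> {0..<M}"] by auto
  then obtain i j where ij: "g i = g j" "i \<noteq> j" unfolding inj_def by blast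
  have "\<exists>i j. i < j \<and> g i = g j"
  proof (cases "i < j")
    case True thus ?thesis using ij by blast
  next
    case False thus ?thesis using ij by (metis linorder_neqE_nat)
  qed
  then obtain i j where ij: "i < j" "g i = g j" by blast
  have "fst (f j) mod M = fst (f i) mod M" "snd (f j) mod M = snd (f i) mod M"
    using ij(2) unfolding g_def by auto
  hence "M dvd fst (f j) - fst (f i)" "M dvd snd (f j) - snd (f i)"
    by (simp_all add: mod_eq_dvd_iff)
  then obtain k1 k2 where k: "fst (f j) - fst (f i) = M * k1" "snd (f j) - snd (f i) = M * k2"
    by (auto elim!: dvdE)
  have "of_int D * (x ^ j - x ^ i) = of_int (fst (f j) - fst (f i)) + of_int (snd (f j) - snd (f i)) * w"
    using f[of i] f[of j] by (simp add: algebra_simps)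
  also have "\<dots> = of_int D * (of_int n * (of_int k1 + of_int k2 * w))"
    unfolding k M_def by (simp add: algebra_simps)
  finally have "x ^ j - x ^ i = of_int n * (of_int k1 + of_int k2 * w)" using D_pos by simp
  moreover have "of_int n * (of_int k1 + of_int k2 * w) \<in> P"
    using P_mult'[OF n_P R_add[OF R_int R_mult[OF R_int w_R]]] .
  ultimately have h: "x ^ i * (x ^ (j - i) - 1) \<in> P"
    using ij(1) by (simp add: algebra_simps flip: power_add)
  have "x ^ (j - i) - 1 \<in> P"
    using P_prime[OF R_pow[OF x(1)] R_diff[OF R_pow[OF x(1)] R_1] h] pow_notP[OF x] by blast
  moreover have "x * x ^ (j - i - 1) = x ^ (j - i)"
    using ij(1) by (metis Suc_diff_Suc diff_Suc_1 minus_nat.diff_0 power_Suc zero_less_diff)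
  ultimately show ?thesis using R_pow[OF x(1)] by metis
qed

lemma nonsq:
  assumes b: "b \<in> R" "\<not> (\<exists>x\<in>R. b - x^2 \<in> P)"
    and uv: "u \<in> R" "v \<in> R" "u^2 - b * v^2 \<in> P"
  shows "u \<in> P \<and> v \<in> P"
proof -
  have vP: "v \<in> P"
  proof (rule ccontr)
    assume "v \<notin> P"
    then obtain v' where v': "v' \<in> R" "v * v' - 1 \<in> P" using inv_mod[OF uv(2)] by blast
    have "v'^2 * (u^2 - b * v^2) \<in> P" using P_mult[OF R_pow[OF v'(1)] uv(3)] .
    moreover have "b * (v * v' + 1) * (v * v' - 1) \<in> P"
      using P_mult[OF R_mult[OF b(1) R_add[OF R_mult[OF uv(2) v'(1)] R_1]] v'(2)] .
    ultimately have "v'^2 * (u^2 - b * v^2) + b * (v * v' + 1) * (v * v' - 1) \<in> P" by (rule P_add)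
    hence "- (v'^2 * (u^2 - b * v^2) + b * (v * v' + 1) * (v * v' - 1)) \<in> P" by (rule P_uminus)
    moreover have "- (v'^2 * (u^2 - b * v^2) + b * (v * v' + 1) * (v * v' - 1)) = b - (u * v')^2"
      by (simp add: algebra_simps power2_eq_square)
    ultimately have "b - (u * v')^2 \<in> P" by simp
    thus False using b(2) R_mult[OF uv(1) v'(1)] by blast
  qed
  have "(u^2 - b * v^2) + b * v * v \<in> P"
    using P_add[OF uv(3) P_mult[OF R_mult[OF b(1) uv(2)] vP]] by (simp add: mult.assoc)
  hence "u * u \<in> P" by (simp add: power2_eq_square)
  hence "u \<in> P" using P_prime[OF uv(1) uv(1)] by blast
  thus ?thesis using vP by blast
qed

lemma lemC:
  assumes b: "b \<in> R" "\<not> (\<exists>x\<in>R. b - x^2 \<in> P)"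
    and ag: "a \<in> IP j" "g \<in> IP j" "a^2 - b * g^2 \<in> IP (Suc (j + j))"
  shows "a \<in> IP (Suc j) \<and> g \<in> IP (Suc j)"
proof -
  have h: "a * cnj e / of_int n ^ j \<in> P \<and> g * cnj e / of_int n ^ j \<in> P" if e: "e \<in> IP j" for e
  proof (rule nonsq[OF b])
    show "a * cnj e / of_int n ^ j \<in> R" "g * cnj e / of_int n ^ j \<in> R" using lemE e ag by auto
    have "(a^2 - b * g^2) * cnj (e * e) / of_int n ^ (j + j) \<in> P"
      using lemD[OF ag(3) IP_prod[OF e e]] .
    moreover have "(a^2 - b * g^2) * cnj (e * e) / of_int n ^ (j + j) =
       (a * cnj e / of_int n ^ j)^2 - b * (g * cnj e / of_int n ^ j)^2"
      using n_nz by (simp add: field_simps power_add power2_eq_square)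
    ultimately show "(a * cnj e / of_int n ^ j)^2 - b * (g * cnj e / of_int n ^ j)^2 \<in> P" by simp
  qed
  show ?thesis using lemF[OF IP_R[OF ag(1)]] lemF[OF IP_R[OF ag(2)]] h by blast
qed

lemma krull:
  assumes z: "z \<in> R" "\<And>j. z \<in> IP j"
  shows "z = 0"
proof (rule ccontr)
  assume nz: "z \<noteq> 0"
  obtain K where K: "z * cnj z = of_int K" using R_nm[OF z(1)] by (auto elim: Ints_cases)
  have "z * cnj z = of_real ((cmod z)^2)" by (metis complex_norm_square of_real_power)
  hence "real_of_int K = (cmod z)^2" using K by (metis of_real_eq_iff of_real_of_int_eq)
  hence Kpos: "K > 0" using nz by (metis of_int_0_less_iff zero_less_norm_iff zero_less_power)
  have le: "n ^ j \<le> K" for j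
  proof -
    have "z * cnj z / of_int n ^ j \<in> R" using lemE[OF z(2) z(2)] .
    hence ai: "algebraic_int (of_int K / of_int (n ^ j) :: complex)" using K by (simp add: ring_of_integers_def)
    have "(of_int K / of_int (n ^ j) :: complex) \<in> \<rat>" by simp
    hence "(of_int K / of_int (n ^ j) :: complex) \<in> \<int>" using rational_algebraic_int_is_int[OF ai] by blast
    then obtain L where L: "(of_int K / of_int (n ^ j) :: complex) = of_int L" by (auto elim: Ints_cases)
    have "n ^ j \<noteq> 0" using n_pos by simp
    hence "(of_int K :: complex) = of_int L * of_int (n ^ j)" using L by (simp add: field_simps)
    hence "K = L * n ^ j" by (metis of_int_eq_iff of_int_mult)
    hence "n ^ j dvd K" by simp
    thus ?thesis using Kpos by (simp add: zdvd_imp_le)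
  qed
  have "(2::int) ^ nat K \<le> n ^ nat K" using n_ge2 by (simp add: power_mono)
  also have "\<dots> \<le> K" by (rule le)
  finally have "(2::int) ^ nat K \<le> K" .
  moreover have "int (nat K) < 2 ^ nat K" using less_exp[of "nat K"] by (metis of_nat_less_iff of_nat_numeral of_nat_power)
  ultimately show False using Kpos by simp
qed

lemma sq_IP: "u \<in> IP j \<Longrightarrow> u^2 \<in> IP (j + j)"
  using IP_prod by (simp add: power2_eq_square)

lemma main_zero:
  assumes b: "b \<in> R" "\<not> (\<exists>x\<in>R. b - x^2 \<in> P)"
    and x: "x \<in> IP (Suc m)" "x \<notin> IP (Suc (Suc m))"
    and y: "y \<in> IP m" "y \<notin> IP (Suc m)"
    and abcd: "\<alpha> \<in> R" "\<beta> \<in> R" "\<gamma> \<in> R" "\<delta> \<in> R"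
    and eq: "y * (\<alpha>^2 - b * \<gamma>^2) = x * (\<beta>^2 - b * \<delta>^2)"
  shows "\<alpha> = 0 \<and> \<beta> = 0 \<and> \<gamma> = 0 \<and> \<delta> = 0"
proof -
  have AR: "\<alpha>^2 - b * \<gamma>^2 \<in> R" using abcd b by (simp add: R_diff R_mult R_pow)
  have BR: "\<beta>^2 - b * \<delta>^2 \<in> R" using abcd b by (simp add: R_diff R_mult R_pow)
  have all: "\<alpha> \<in> IP j \<and> \<beta> \<in> IP j \<and> \<gamma> \<in> IP j \<and> \<delta> \<in> IP j" for j
  proof (induction j)
    case 0 thus ?case using abcd by simp
  next
    case (Suc j)
    hence IH: "\<alpha> \<in> IP j" "\<beta> \<in> IP j" "\<gamma> \<in> IP j" "\<delta> \<in> IP j" by auto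
    have B2: "\<beta>^2 - b * \<delta>^2 \<in> IP (j + j)"
      using IP_diff[OF sq_IP[OF IH(2)] IP_mult[OF b(1) sq_IP[OF IH(4)]]] .
    have "x * (\<beta>^2 - b * \<delta>^2) \<in> IP (Suc m + (j + j))" using IP_prod[OF x(1) B2] .
    hence "y * (\<alpha>^2 - b * \<gamma>^2) \<in> IP (m + Suc (j + j))" using eq by simp
    hence "\<alpha>^2 - b * \<gamma>^2 \<in> IP (Suc (j + j))" by (rule cancel[OF y AR])
    hence ag: "\<alpha> \<in> IP (Suc j) \<and> \<gamma> \<in> IP (Suc j)" using lemC[OF b IH(1) IH(3)] by blast
    have A2: "\<alpha>^2 - b * \<gamma>^2 \<in> IP (Suc j + Suc j)"
      using IP_diff[OF sq_IP IP_mult[OF b(1) sq_IP]] ag by blast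
    have "y * (\<alpha>^2 - b * \<gamma>^2) \<in> IP (m + (Suc j + Suc j))" using IP_prod[OF y(1) A2] .
    hence "x * (\<beta>^2 - b * \<delta>^2) \<in> IP (Suc m + Suc (j + j))" using eq by simp
    hence "\<beta>^2 - b * \<delta>^2 \<in> IP (Suc (j + j))" by (rule cancel[OF x BR])
    hence bd: "\<beta> \<in> IP (Suc j) \<and> \<delta> \<in> IP (Suc j)" using lemC[OF b IH(2) IH(4)] by blast
    show ?case using ag bd by blast
  qed
  show ?thesis using krull all abcd by metis
qed

end



context qf begin

lemma nvd:
  assumes b: "b \<in> R" "\<not> (\<exists>x\<in>R. b - x^2 \<in> P)"
    and hpi: "pval_eq R P \<pi> 1" and hs: "s ^ 2 = \<pi>"
  shows "(INF X \<in> codebook R s b - {0}. (cmod (det X))\<^sup>2) > 0"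
proof -
  obtain xx yy m m' where xy: "xx \<in> R" "yy \<in> R" "xx \<noteq> 0" "yy \<noteq> 0" "\<pi> = xx / yy"
    "ord_eq R P xx m" "ord_eq R P yy m'" "int m - int m' = 1"
    using hpi unfolding pval_eq_def by blast
  have mm: "m = Suc m'" using xy(8) by simp
  have x: "xx \<in> IP (Suc m')" "xx \<notin> IP (Suc (Suc m'))" using xy(6) mm unfolding ord_eq_def by auto
  have y: "yy \<in> IP m'" "yy \<notin> IP (Suc m')" using xy(7) unfolding ord_eq_def by auto
  define c where "c = 1 / (cmod yy)^2"
  have cpos: "c > 0" using xy(4) unfolding c_def by simp
  have bound: "c \<le> (cmod (det X))\<^sup>2" if X: "X \<in> codebook R s b - {0}" for X
  proof -
    obtain \<alpha> \<beta> \<gamma> \<delta> where X': "X = vector [vector [\<alpha> + \<beta> * s, \<gamma> + \<delta> * s],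
              vector [b * (\<gamma> - \<delta> * s), \<alpha> - \<beta> * s]]" and abcd: "\<alpha> \<in> R" "\<beta> \<in> R" "\<gamma> \<in> R" "\<delta> \<in> R"
      using X unfolding codebook_def by blast
    have det: "det X = (\<alpha> + \<beta> * s) * (\<alpha> - \<beta> * s) - (\<gamma> + \<delta> * s) * (b * (\<gamma> - \<delta> * s))"
      unfolding X' by (simp add: det_2)
    define num where "num = yy * (\<alpha>^2 - b * \<gamma>^2) - xx * (\<beta>^2 - b * \<delta>^2)"
    have s2: "yy * s^2 = xx" using hs xy(4,5) by simp
    have ynum: "yy * det X = num"
    proof -
      have "yy * det X = yy * \<alpha>^2 - \<beta>^2 * (yy * s^2) - b * (yy * \<gamma>^2 - \<delta>^2 * (yy * s^2))"
        unfolding det by (simp add: algebra_simps power2_eq_square)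
      thus ?thesis unfolding num_def s2 by (simp add: algebra_simps)
    qed
    have numR: "num \<in> R" unfolding num_def using abcd b(1) xy(1,2)
      by (simp add: R_diff R_mult R_pow)
    have "num \<noteq> 0"
    proof
      assume "num = 0"
      hence "yy * (\<alpha>^2 - b * \<gamma>^2) = xx * (\<beta>^2 - b * \<delta>^2)" unfolding num_def by simp
      hence "\<alpha> = 0 \<and> \<beta> = 0 \<and> \<gamma> = 0 \<and> \<delta> = 0" using main_zero[OF b x y abcd] by blast
      hence "X = 0" unfolding X' by (simp add: vec_eq_iff forall_2)
      thus False using X by simp
    qed
    obtain K where K: "num * cnj num = of_int K" using R_nm[OF numR] by (auto elim: Ints_cases)
    have "num * cnj num = of_real ((cmod num)^2)" by (metis complex_norm_square of_real_power)
    hence Kr: "real_of_int K = (cmod num)^2" using K by (metis of_real_eq_iff of_real_of_int_eq)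
    hence "K > 0" using \<open>num \<noteq> 0\<close> by (metis of_int_0_less_iff zero_less_norm_iff zero_less_power)
    hence n1: "(cmod num)^2 \<ge> 1" using Kr by (metis of_int_1_le_iff zero_less_imp_eq_int int_one_le_iff_zero_less)
    have "det X = num / yy" using ynum xy(4) by (simp add: field_simps)
    hence "(cmod (det X))^2 = (cmod num)^2 / (cmod yy)^2" by (simp add: norm_divide power_divide)
    thus ?thesis unfolding c_def using n1 xy(4) by (simp add: divide_right_mono)
  qed
  define I0 :: "complex^2^2" where "I0 = vector [vector [1 + 0 * s, 0 + 0 * s], vector [b * (0 - 0 * s), 1 - 0 * s]]"
  have "I0 \<in> codebook R s b" unfolding codebook_def I0_def using R_0 R_1 by blast
  moreover have "I0 \<noteq> 0" unfolding I0_def by (auto simp: vec_eq_iff forall_2)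
  ultimately have ne: "codebook R s b - {0} \<noteq> {}" by blast
  have "c \<le> (INF X \<in> codebook R s b - {0}. (cmod (det X))\<^sup>2)"
    using ne bound by (intro cINF_greatest) auto
  thus ?thesis using cpos by linarith
qed

end



lemma cpx_of_rat: "(of_rat r :: complex) = complex_of_real (of_rat r)"
  by (cases r) (simp add: of_rat_rat)

lemma cnj_rat: "x \<in> \<rat> \<Longrightarrow> cnj x = (x::complex)"
  by (auto elim!: Rats_cases simp: cpx_of_rat)

lemma Im_rat: "Im (of_rat r :: complex) = 0"
  by (simp add: cpx_of_rat)

lemma qf_Rats:
  assumes "is_nonzero_prime_ideal (ring_of_integers \<rat>) P"
  shows "qf \<rat> P 1 0"
proof
  show "x \<in> \<rat> \<Longrightarrow> x + cnj x \<in> \<rat>" for x :: complex by (simp add: cnj_rat)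
  show "x \<in> \<rat> \<Longrightarrow> x * cnj x \<in> \<rat>" for x :: complex by (simp add: cnj_rat)
  show "x \<in> \<rat> \<Longrightarrow> x + cnj x \<in> \<int> \<Longrightarrow> x * cnj x \<in> \<int> \<Longrightarrow>
        \<exists>a b. of_int 1 * x = of_int a + of_int b * 0" for x :: complex
  proof -
    assume x: "x \<in> \<rat>" "x * cnj x \<in> \<int>"
    hence "x ^ 2 \<in> \<int>" by (simp add: cnj_rat power2_eq_square)
    hence "x \<in> \<int>" using rat_sq_int x(1) by blast
    thus ?thesis by (auto elim: Ints_cases)
  qed
qed (use assms in \<open>auto simp: cnj_rat\<close>)

locale qd =
  fixes d :: nat
  assumes d_pos: "d > 0"
begin

definition om :: complex where "om = \<i> * complex_of_real (sqrt (real d))"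

definition FF :: "complex set" where
  "FF = {of_rat p + of_rat q * \<i> * complex_of_real (sqrt (real d)) | p q. True}"

lemma memF: "x \<in> FF \<longleftrightarrow> (\<exists>p q. x = of_rat p + of_rat q * om)"
  unfolding FF_def om_def by (simp add: mult.assoc)

lemma om_sq: "om * om = - of_nat d"
proof -
  have "complex_of_real (sqrt (real d)) * complex_of_real (sqrt (real d)) = of_nat d"
  proof -
    have "complex_of_real (sqrt (real d)) * complex_of_real (sqrt (real d)) = complex_of_real (sqrt (real d) * sqrt (real d))"
      by (simp only: of_real_mult)
    also have "sqrt (real d) * sqrt (real d) = real d" by simp
    finally show ?thesis by simp
  qed
  thus ?thesis unfolding om_def by (simp add: algebra_simps)
qed

lemma cnj_om: "cnj om = - om" unfolding om_def by simp

lemma cnj_ratc: "cnj (of_rat p :: complex) = of_rat p" by (simp add: cpx_of_rat)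

lemma Im_om: "Im (of_rat q * om) = of_rat q * sqrt (real d)"
  unfolding om_def by (simp add: cpx_of_rat)

lemma qf_inst:
  assumes "is_nonzero_prime_ideal (ring_of_integers FF) P"
  shows "qf FF P (2 * int d) om"
proof
  fix x y assume "x \<in> FF" "y \<in> FF"
  then obtain p1 q1 p2 q2 where x: "x = of_rat p1 + of_rat q1 * om" and y: "y = of_rat p2 + of_rat q2 * om"
    by (auto simp: memF)
  have "x + y = of_rat (p1 + p2) + of_rat (q1 + q2) * om" unfolding x y by (simp add: of_rat_add algebra_simps)
  thus "x + y \<in> FF" by (auto simp: memF)
  have "x * y = of_rat (p1 * p2 - of_nat d * q1 * q2) + of_rat (p1 * q2 + q1 * p2) * om"
    unfolding x y of_rat_add of_rat_mult of_rat_diff of_rat_of_nat_eq using om_sq by algebra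
  thus "x * y \<in> FF" by (auto simp: memF)
next
  fix x assume "x \<in> FF"
  then obtain p q where x: "x = of_rat p + of_rat q * om" by (auto simp: memF)
  have "- x = of_rat (- p) + of_rat (- q) * om" unfolding x by (simp add: of_rat_minus)
  thus "- x \<in> FF" by (auto simp: memF)
  have cx: "cnj x = of_rat p + of_rat (- q) * om" unfolding x by (simp add: cnj_ratc cnj_om of_rat_minus)
  thus "cnj x \<in> FF" by (auto simp: memF)
  have "x + cnj x = of_rat (2 * p)" unfolding cx unfolding x by (simp add: of_rat_mult of_rat_minus)
  thus "x + cnj x \<in> \<rat>" by simp
  have nm: "x * cnj x = of_rat (p * p + of_nat d * q * q)"
    unfolding cx unfolding x of_rat_add of_rat_mult of_rat_minus of_rat_of_nat_eq using om_sq by algebra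
  thus "x * cnj x \<in> \<rat>" by simp
  show "inverse x \<in> FF"
  proof (cases "x = 0")
    case True
    have "(0::complex) = of_rat 0 + of_rat 0 * om" by simp
    hence "0 \<in> FF" using memF by blast
    thus ?thesis using True by simp
  next
    case False
    define N where "N = p * p + of_nat d * q * q"
    have "N \<noteq> 0"
    proof
      assume "N = 0"
      hence "x * cnj x = 0" using nm N_def by simp
      thus False using False by simp
    qed
    have "x * (of_rat (p / N) + of_rat (- q / N) * om) = x * cnj x / of_rat N"
      unfolding cx using \<open>N \<noteq> 0\<close> by (simp add: of_rat_divide of_rat_minus field_simps)
    also have "\<dots> = 1" using nm \<open>N \<noteq> 0\<close> unfolding N_def by simp
    finally have "inverse x = of_rat (p / N) + of_rat (- q / N) * om" by (rule inverse_unique)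
    thus ?thesis by (auto simp: memF)
  qed
  show "Im x = 0 \<Longrightarrow> x \<in> \<rat>"
  proof -
    assume "Im x = 0"
    moreover have "Im x = Im (of_rat p :: complex) + Im (of_rat q * om)" unfolding x by (rule plus_complex.sel(2))
    ultimately have "of_rat q * sqrt (real d) = 0" by (simp only: Im_om Im_rat add_0_left)
    hence "q = 0" using d_pos by simp
    thus "x \<in> \<rat>" unfolding x by simp
  qed
  show "x + cnj x \<in> \<int> \<Longrightarrow> x * cnj x \<in> \<int> \<Longrightarrow> \<exists>a b. of_int (2 * int d) * x = of_int a + of_int b * om"
  proof -
    assume tr: "x + cnj x \<in> \<int>" and nmi: "x * cnj x \<in> \<int>"
    have t: "(of_rat (2 * p) :: complex) \<in> \<int>" using tr \<open>x + cnj x = of_rat (2 * p)\<close> by simp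
    have y2: "(of_rat (2 * of_nat d * q) :: complex)^2 =
              of_nat d * (4 * (x * cnj x) - (of_rat (2 * p))^2)"
      unfolding nm of_rat_mult of_rat_add of_rat_of_nat_eq by (simp add: algebra_simps power2_eq_square)
    have "(of_rat (2 * of_nat d * q) :: complex)^2 \<in> \<int>" unfolding y2
      by (intro Ints_mult Ints_diff Ints_power nmi t Ints_of_nat Ints_numeral)
    hence "(of_rat (2 * of_nat d * q) :: complex) \<in> \<int>" by (rule rat_sq_int[rotated]) simp
    then obtain b where b: "(of_rat (2 * of_nat d * q) :: complex) = of_int b" by (auto elim: Ints_cases)
    obtain a0 where a0: "(of_rat (2 * p) :: complex) = of_int a0" using t by (auto elim: Ints_cases)
    have "of_int (2 * int d) * x = of_nat d * of_rat (2 * p) + of_rat (2 * of_nat d * q) * om"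
      unfolding x by (simp add: of_rat_mult algebra_simps)
    also have "\<dots> = of_int (int d * a0) + of_int b * om" unfolding a0 b by simp
    finally show ?thesis by blast
  qed
next
  fix r :: complex assume "r \<in> \<rat>"
  then obtain p where "r = of_rat p" by (auto elim: Rats_cases)
  thus "r \<in> FF" using memF[of r] by (metis add.right_neutral mult_zero_left of_rat_0)
next
  show "0 < 2 * int d" using d_pos by simp
  show "om \<in> FF" using memF[of om] by (metis add_0 mult_1 of_rat_0 of_rat_1)
  show "om + cnj om \<in> \<int>" by (simp add: cnj_om)
  show "om * cnj om \<in> \<int>" using om_sq by (simp add: cnj_om)
  show "is_nonzero_prime_ideal (ring_of_integers FF) P" by (rule assms)
qed

end

theorem theorem7p3:
  fixes F :: "complex set" and P :: "complex set" and \<pi> b s :: complex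
  assumes hF: "F = \<rat> \<or>
      (\<exists>d::nat. d > 0 \<and> squarefree d \<and>
         F = {of_rat p + of_rat q * \<i> * complex_of_real (sqrt (real d)) | p q. True})"
    and hP: "is_nonzero_prime_ideal (ring_of_integers F) P"
    and hpi: "\<pi> \<in> F" "pval_eq (ring_of_integers F) P \<pi> 1"
    and hb: "b \<in> ring_of_integers F"
      "\<not> (\<exists>x \<in> ring_of_integers F. b - x ^ 2 \<in> P)"
    and hs: "s ^ 2 = \<pi>"
  shows "(INF X \<in> codebook (ring_of_integers F) s b - {0}. (cmod (det X))\<^sup>2) > 0"
proof (cases "F = \<rat>")
  case True
  interpret qf F P 1 0 using qf_Rats hP True by simp
  show ?thesis by (rule nvd[OF hb hpi(2) hs])
next
  case False
  then obtain d :: nat where d: "d > 0"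
    "F = {of_rat p + of_rat q * \<i> * complex_of_real (sqrt (real d)) | p q. True}" using hF by blast
  interpret qd d using d(1) by unfold_locales
  have FF: "F = FF" unfolding FF_def d(2) ..
  interpret qf F P "2 * int d" om using qf_inst hP FF by simp
  show ?thesis by (rule nvd[OF hb hpi(2) hs])
qed



end
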